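(* Let $k\geq 2$, let $\mathbb Z_0=\mathbb Z\setminus\{0\}$, and let $z=\{z_j\}_{j\in\mathbb Z_0}$ be positive numbers such that $\sum_{j\in\mathbb Z_0}z_j$ converges with sum $A\neq\frac{1}{k-1}$. Then there exists a number $B>0$, $B\neq A$, satisfying $A(1+B)^k=B(1+A)^k$, which is the sum of a unique convergent series $\sum_{j\in\mathbb Z_0}\tilde z_j$ with $\tilde z\neq z$, and there is a unique sequence of positive parameters $\{\lambda_j\}_{j\in\mathbb Z_0}$, such that both $(z,\tilde z)$ and $(\tilde z,z)$ are solutions of the system $$u_i=\lambda_i\Bigl(\frac{1}{1+\sum_{j\in\mathbb Z_0}v_j}\Bigr)^{k},\qquad v_i=\lambda_i\Bigl(\frac{1}{1+\sum_{j\in\mathbb Z_0}u_j}\Bigr)^{k},\qquad i\in\mathbb Z_0,$$ in the unknowns $(u,v)$, where $\tilde z=\{\tilde z_j\}_{j\in\mathbb Z_0}$. *)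

theory Defs
  imports "HOL-Analysis.Analysis"
begin

definition Z0 :: "int set" where
  "Z0 = UNIV - {0}"

definition is_solution :: "nat \<Rightarrow> (int \<Rightarrow> real) \<Rightarrow> (int \<Rightarrow> real) \<Rightarrow> (int \<Rightarrow> real) \<Rightarrow> bool" where
  "is_solution k lam u v \<longleftrightarrow>
     u summable_on Z0 \<and> v summable_on Z0 \<and>
     (\<forall>i\<in>Z0. u i = lam i * (1 / (1 + infsum v Z0)) ^ k \<and>
              v i = lam i * (1 / (1 + infsum u Z0)) ^ k)"

end

theory Submission
  imports Defs
begin

lemma fderiv:
  fixes y :: real assumes "y > -1" and "k \<ge> 1"
  shows "DERIV (\<lambda>x. x / (1+x)^k) y :> (1 - (real k - 1)*y) * (1+y)^(k-1) / ((1+y)^k)^2"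
proof -
  have "DERIV (\<lambda>x. x / (1+x)^k) y :> ((1+y)^k - y*(real k*(1+y)^(k-1)))/((1+y)^k)^2"
    using assms by (auto intro!: derivative_eq_intros simp: power2_eq_square)
  moreover have "(1+y)^k - y*(real k*(1+y)^(k-1)) = (1 - (real k - 1)*y) * (1+y)^(k-1)"
  proof (cases k)
    case (Suc m) then show ?thesis by (simp add: algebra_simps)
  qed (use assms in simp)
  ultimately show ?thesis by simp
qed

lemma fmax:
  fixes x :: real
  assumes k: "k \<ge> 2" and x: "x \<ge> 0" "x \<noteq> 1 / (real k - 1)"
  shows "x / (1+x)^k < (1 / (real k - 1)) / (1 + 1 / (real k - 1))^k"
proof -
  define c where "c = 1 / (real k - 1)"
  define d where "d = (\<lambda>y::real. (1 - (real k - 1)*y) * (1+y)^(k-1) / ((1+y)^k)^2)"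
  have kr: "real k - 1 \<ge> 1" using k by simp
  have c0: "c > 0" unfolding c_def using kr by simp
  have D: "\<And>y. y > -1 \<Longrightarrow> DERIV (\<lambda>x. x / (1+x)^k) y :> d y"
    unfolding d_def using fderiv k by simp
  have lt: "(real k - 1) * y < 1" if "y < c" for y
    using that kr unfolding c_def by (simp add: field_simps)
  have gt: "(real k - 1) * y > 1" if "y > c" for y
    using that kr unfolding c_def by (simp add: field_simps)
  show ?thesis
  proof (cases "x < c")
    case True
    from MVT2[OF True, of "\<lambda>x. x / (1+x)^k" d] D x c0
    obtain z where z: "x < z" "z < c" "c/(1+c)^k - x/(1+x)^k = (c - x) * d z"
      by fastforce
    have "d z > 0" unfolding d_def using lt[OF z(2)] z(1) x by (intro divide_pos_pos mult_pos_pos) auto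
    then have "(c - x) * d z > 0" using z by simp
    then show ?thesis using z unfolding c_def by simp
  next
    case False
    then have xc: "c < x" using x c_def by auto
    from MVT2[OF xc, of "\<lambda>x. x / (1+x)^k" d] D x c0
    obtain z where z: "c < z" "z < x" "x/(1+x)^k - c/(1+c)^k = (x - c) * d z"
      by fastforce
    have "d z < 0" unfolding d_def using gt[OF z(1)] z(1) c0
      by (intro divide_neg_pos mult_neg_pos) auto
    then have "(x - c) * d z < 0" using xc by (simp add: mult_pos_neg)
    then show ?thesis using z unfolding c_def by simp
  qed
qed

lemma fbound:
  fixes x :: real
  assumes k: "k \<ge> 2" and x: "x > 0"
  shows "x / (1+x)^k \<le> 1 / x"
proof -
  have "x^2 \<le> (1+x)^2" using x by (intro power_mono) auto
  also have "(1+x)^2 \<le> (1+x)^k" using x k by (intro power_increasing) auto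
  finally have "x * x \<le> (1+x)^k" by (simp add: power2_eq_square)
  then show ?thesis using x by (simp add: field_simps)
qed

lemma fcont: "(y::real) > -1 \<Longrightarrow> isCont (\<lambda>x. x / (1+x)^k) y"
  by (auto intro!: continuous_intros)

lemma existsB:
  fixes A :: real
  assumes k: "k \<ge> 2" and A: "A > 0" "A \<noteq> 1 / (real k - 1)"
  shows "\<exists>B>0. B \<noteq> A \<and> B / (1+B)^k = A / (1+A)^k"
proof -
  define c where "c = 1 / (real k - 1)"
  define f where "f = (\<lambda>x::real. x / (1+x)^k)"
  have kr: "real k - 1 \<ge> 1" using k by simp
  have c0: "c > 0" unfolding c_def using kr by simp
  have fA: "f A < f c" unfolding f_def c_def using fmax[OF k] A by simp
  have fApos: "f A > 0" unfolding f_def using A by simp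
  have cont: "\<And>x. 0 \<le> x \<Longrightarrow> isCont f x" unfolding f_def by (intro fcont) simp
  show ?thesis
  proof (cases "A < c")
    case True
    define M where "M = max c (1 / f A) + 1"
    have M: "M > 0" "c \<le> M" "M > 1 / f A" unfolding M_def using c0 by auto
    have "f M \<le> 1 / M" unfolding f_def using fbound[OF k M(1)] .
    also have "1 / M < f A" using M fApos by (simp add: field_simps)
    finally have "f M \<le> f A" by simp
    from IVT2[of f M "f A" c, OF this less_imp_le[OF fA] M(2)] cont c0
    obtain B where B: "c \<le> B" "B \<le> M" "f B = f A" by auto
    then show ?thesis using True c0 unfolding f_def by (intro exI[of _ B]) auto
  next
    case False
    then have Ac: "A > c" using A c_def by auto
    have "f 0 \<le> f A" unfolding f_def using A by simp
    from IVT[of f 0 "f A" c, OF this less_imp_le[OF fA]] cont c0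
    obtain B where B: "0 \<le> B" "B \<le> c" "f B = f A" by auto
    have "B \<noteq> 0" using B(3) fApos unfolding f_def by (metis div_0 order_less_irrefl)
    then show ?thesis using B Ac unfolding f_def by (intro exI[of _ B]) auto
  qed
qed

theorem mainTheorem5:
  fixes k :: nat and z :: "int \<Rightarrow> real" and A :: real
  assumes "k \<ge> 2"
    and "\<forall>j\<in>Z0. z j > 0"
    and "(z has_sum A) Z0"
    and "A \<noteq> 1 / (real k - 1)"
  shows "\<exists>B::real. B > 0 \<and> B \<noteq> A \<and> A * (1 + B) ^ k = B * (1 + A) ^ k \<and>
           (\<exists>zt lam. (zt has_sum B) Z0 \<and> (\<exists>j\<in>Z0. zt j \<noteq> z j) \<and>
              (\<forall>j\<in>Z0. lam j > 0) \<and>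
              is_solution k lam z zt \<and> is_solution k lam zt z \<and>
              (\<forall>zt' lam'. ((zt' has_sum B) Z0 \<and> (\<exists>j\<in>Z0. zt' j \<noteq> z j) \<and>
                   (\<forall>j\<in>Z0. lam' j > 0) \<and>
                   is_solution k lam' z zt' \<and> is_solution k lam' zt' z)
                 \<longrightarrow> (\<forall>j\<in>Z0. zt' j = zt j \<and> lam' j = lam j)))"
proof -
  have one: "1 \<in> Z0" unfolding Z0_def by simp
  have "(z has_sum z 1) {1}" using has_sum_finite[of "{1::int}" z] by simp
  then have "z 1 \<le> A"
    by (rule has_sum_mono_neutral[OF _ assms(3)]) (use assms(2) one in auto)
  then have A0: "A > 0" using assms(2) one by fastforce
  obtain B where B: "B > 0" "B \<noteq> A" "B / (1+B)^k = A / (1+A)^k"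
    using existsB[OF assms(1) A0 assms(4)] by blast
  have pA: "(1+A)^k > 0" and pB: "(1+B)^k > 0" using A0 B by auto
  have eq: "A * (1 + B) ^ k = B * (1 + A) ^ k"
    using B(3) frac_eq_eq[of "(1+B)^k" "(1+A)^k" B A] pA pB by (metis less_irrefl)
  define r where "r = (1+B)^k / (1+A)^k"
  define zt where "zt = (\<lambda>j. z j * r)"
  define lam where "lam = (\<lambda>j. z j * (1+B)^k)"
  have r0: "r > 0" unfolding r_def using pA pB by simp
  have "A * r = B" unfolding r_def using eq pA A0 by (simp add: field_simps)
  then have zt_sum: "(zt has_sum B) Z0" unfolding zt_def using has_sum_cmult_left[OF assms(3), of r] by simp
  have infA: "infsum z Z0 = A" using assms(3) by (rule infsumI)
  have infB: "infsum zt Z0 = B" using zt_sum by (rule infsumI)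
  have r1: "r \<noteq> 1"
  proof
    assume "r = 1"
    then have "(1+B)^k = (1+A)^k" unfolding r_def using pA by simp
    then have "1+B = 1+A" using A0 B(1) assms(1)
      by (metis less_le_trans power_eq_imp_eq_base zero_le_one add_nonneg_nonneg less_imp_le zero_less_numeral not_numeral_le_zero le_zero_eq gr0I)
    then show False using B(2) by simp
  qed
  have ne: "\<exists>j\<in>Z0. zt j \<noteq> z j" using one assms(2) r1 unfolding zt_def by (intro bexI[OF _ one]) auto
  have lampos: "\<forall>j\<in>Z0. lam j > 0" unfolding lam_def using assms(2) pB by simp
  have s1: "is_solution k lam z zt" unfolding is_solution_def infA infB
    using assms(3) zt_sum pA pB A0 B(1) by (auto simp: summable_on_def lam_def zt_def r_def power_one_over field_simps)
  have s2: "is_solution k lam zt z" unfolding is_solution_def infA infB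
    using assms(3) zt_sum pA pB A0 B(1) by (auto simp: summable_on_def lam_def zt_def r_def power_one_over field_simps)
  have uniq: "\<forall>j\<in>Z0. zt' j = zt j \<and> lam' j = lam j"
    if H: "(zt' has_sum B) Z0" "is_solution k lam' z zt'" for zt' lam'
  proof
    fix j assume j: "j \<in> Z0"
    have iB: "infsum zt' Z0 = B" using H(1) by (rule infsumI)
    from H(2) j have "z j = lam' j * (1 / (1 + B)) ^ k" "zt' j = lam' j * (1 / (1 + A)) ^ k"
      unfolding is_solution_def iB infA by auto
    then show "zt' j = zt j \<and> lam' j = lam j"
      using pA pB A0 B(1) by (auto simp: lam_def zt_def r_def power_one_over field_simps)
  qed
  show ?thesis
    using B(1,2) eq zt_sum ne lampos s1 s2 uniq by blast
qed

end
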